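(* Let $d,n\ge1$ and $\Lambda=\mathrm{diag}(\lambda_1,\dots,\lambda_d)$ a diagonal covariance matrix. Let $x^{(1)},\dots,x^{(n)}\in\mathbb{R}^d$ be i.i.d. $\mathcal{N}(0,\Lambda)$, $w_\star\sim\mathcal{N}(0,I_d)$ independent, $y^{(i)}=\langle w_\star,x^{(i)}\rangle$, $z^{(i)}=\begin{bmatrix}x^{(i)}\\ y^{(i)}\end{bmatrix}\in\mathbb{R}^{d+1}$, and $C=\frac1n\sum_{i=1}^n z^{(i)}{z^{(i)}}^\top$. Fix $j\in\{1,\dots,d\}$ and for $X\in\mathbb{R}^{(d+1)\times(d+1)}$ define $$f_j(X)=\mathbb{E}\big[(\langle C,X\rangle+w_\star[j])^2\big],\qquad \langle C,X\rangle=\mathrm{tr}(CX^\top).$$ Then a global minimum of $f_j$ is $$X_j=-\frac{1}{\frac{n+1}{n}\lambda_j+\frac1n\sum_{k=1}^d\lambda_k}\,E_{d+1,j},$$ where $E_{d+1,j}$ is the matrix whose $(d+1,j)$ entry is $1$ and all other entries are $0$.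
   Context: $w_\star[j]$ denotes the $j$-th coordinate of $w_\star$. *)

theory Defs
  imports "HOL-Probability.Probability"
begin

definition gauss :: "real \<Rightarrow> real measure" where
  "gauss v = (if v = 0 then return borel 0
              else density lborel (normal_density 0 (sqrt v)))"

text \<open>Indices are 0-based: data coordinates k < d, samples i < n; the augmented
  vector z has coordinates 0..d, coordinate d being the label y.\<close>

definition label :: "nat \<Rightarrow> (nat \<Rightarrow> nat \<Rightarrow> 'a \<Rightarrow> real) \<Rightarrow> (nat \<Rightarrow> 'a \<Rightarrow> real) \<Rightarrow> nat \<Rightarrow> 'a \<Rightarrow> real" where
  "label d x w i \<omega> = (\<Sum>k<d. w k \<omega> * x i k \<omega>)"

definition zvec :: "nat \<Rightarrow> (nat \<Rightarrow> nat \<Rightarrow> 'a \<Rightarrow> real) \<Rightarrow> (nat \<Rightarrow> 'a \<Rightarrow> real) \<Rightarrow> nat \<Rightarrow> 'a \<Rightarrow> nat \<Rightarrow> real" where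
  "zvec d x w i \<omega> a = (if a < d then x i a \<omega> else label d x w i \<omega>)"

definition Cmat :: "nat \<Rightarrow> nat \<Rightarrow> (nat \<Rightarrow> nat \<Rightarrow> 'a \<Rightarrow> real) \<Rightarrow> (nat \<Rightarrow> 'a \<Rightarrow> real) \<Rightarrow> 'a \<Rightarrow> nat \<Rightarrow> nat \<Rightarrow> real" where
  "Cmat d n x w \<omega> a b = (1 / real n) * (\<Sum>i<n. zvec d x w i \<omega> a * zvec d x w i \<omega> b)"

definition frob :: "nat \<Rightarrow> (nat \<Rightarrow> nat \<Rightarrow> real) \<Rightarrow> (nat \<Rightarrow> nat \<Rightarrow> real) \<Rightarrow> real" where
  "frob d A B = (\<Sum>a\<le>d. \<Sum>b\<le>d. A a b * B a b)"

definition fj :: "'a measure \<Rightarrow> nat \<Rightarrow> nat \<Rightarrow> (nat \<Rightarrow> nat \<Rightarrow> 'a \<Rightarrow> real) \<Rightarrow> (nat \<Rightarrow> 'a \<Rightarrow> real) \<Rightarrow> nat \<Rightarrow> (nat \<Rightarrow> nat \<Rightarrow> real) \<Rightarrow> real" where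
  "fj M d n x w j X = (\<integral>\<omega>. (frob d (Cmat d n x w \<omega>) X + w j \<omega>)\<^sup>2 \<partial>M)"

definition Emat :: "nat \<Rightarrow> nat \<Rightarrow> nat \<Rightarrow> nat \<Rightarrow> real" where
  "Emat a b = (\<lambda>r c. if r = a \<and> c = b then 1 else 0)"

end

theory Submission
  imports Defs
begin

lemma gauss_int: assumes "s \<ge> 0" shows "integrable (gauss s) (\<lambda>t. t ^ k)"
proof (cases "s = 0")
  case True
  interpret prob_space "return borel (0::real)" by (rule prob_space_return) simp
  have "integrable (return borel (0::real)) (\<lambda>t. (0::real) ^ k)" by simp
  then show ?thesis using True
    by (simp add: gauss_def) (rule integrable_cong_AE_imp, auto simp: AE_return)
next
  case False
  then have "sqrt s > 0" using assms by simp
  then show ?thesis using False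
    by (simp add: gauss_def integrable_density integrable_normal_moment[of "sqrt s" 0 k, simplified])
qed

lemma gauss_odd: assumes "s \<ge> 0" "odd k" shows "integral\<^sup>L (gauss s) (\<lambda>t. t ^ k) = 0"
proof (cases "s = 0")
  case True then show ?thesis using assms by (simp add: gauss_def integral_return) (cases k, auto)
next
  case False
  then have p: "sqrt s > 0" using assms by simp
  obtain m where k: "k = 2*m+1" using assms oddE by blast
  show ?thesis using False p
    by (simp add: gauss_def integral_density k has_bochner_integral_integral_eq[OF normal_moment_odd[OF p, of 0 m, simplified]])
qed

lemma gauss_even: assumes "s \<ge> 0" shows "integral\<^sup>L (gauss s) (\<lambda>t. t ^ (2*m)) = fact (2 * m) / ((2 / s)^m * fact m)"
proof (cases "s = 0")
  case True then show ?thesis using assms by (simp add: gauss_def power_0_left integral_return measure_return)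
next
  case False
  then have p: "sqrt s > 0" using assms by simp
  show ?thesis using False p assms
    by (simp add: gauss_def integral_density has_bochner_integral_integral_eq[OF normal_moment_even[OF p, of 0 m, simplified]])
qed

lemma gauss_2: assumes "s \<ge> 0" shows "integral\<^sup>L (gauss s) (\<lambda>t. t ^ 2) = s"
  using gauss_even[OF assms, of 1] assms by (cases "s = 0") auto

lemma gauss_4: assumes "s \<ge> 0" shows "integral\<^sup>L (gauss s) (\<lambda>t. t ^ 4) = 3 * s^2"
  using gauss_even[OF assms, of 2] assms by (cases "s = 0") (auto simp: fact_numeral power2_eq_square field_simps)

lemma sum_list_mult_concat:
  fixes L1 L2 :: "(real \<times> ('i \<Rightarrow> nat)) list" and m :: "('i \<Rightarrow> nat) \<Rightarrow> real"
  assumes "\<And>e1 e2. m (\<lambda>v. e1 v + e2 v) = m e1 * m e2"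
  shows "(\<Sum>(c,e)\<leftarrow>L1. c * m e) * (\<Sum>(c,e)\<leftarrow>L2. c * m e) =
    (\<Sum>(c,e)\<leftarrow>concat (map (\<lambda>(c1,e1). map (\<lambda>(c2,e2). (c1*c2, \<lambda>v. e1 v + e2 v)) L2) L1). c * m e)"
proof (induction L1)
  case Nil then show ?case by simp
next
  case (Cons a L1)
  obtain c1 e1 where a: "a = (c1, e1)" by force
  have "(\<Sum>(c,e)\<leftarrow>L2. c * m e) * (c1 * m e1) = (\<Sum>(c,e)\<leftarrow>map (\<lambda>(c2,e2). (c1*c2, \<lambda>v. e1 v + e2 v)) L2. c * m e)"
    by (induction L2) (auto simp: assms algebra_simps)
  then show ?case using Cons a by (simp add: algebra_simps)
qed

locale GaussSetup = prob_space M for M :: "'a measure" +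
  fixes d n :: nat and lam :: "nat \<Rightarrow> real" and x :: "nat \<Rightarrow> nat \<Rightarrow> 'a \<Rightarrow> real" and w :: "nat \<Rightarrow> 'a \<Rightarrow> real"
  assumes d1: "d \<ge> 1" and n1: "n \<ge> 1" and lam0: "\<And>k. k < d \<Longrightarrow> lam k \<ge> 0"
    and ind: "indep_vars (\<lambda>_. borel) (case_sum (\<lambda>(i, k). x i k) w) (({..<n} \<times> {..<d}) <+> {..<d})"
    and dx: "\<And>i k. i < n \<Longrightarrow> k < d \<Longrightarrow> distr M borel (x i k) = gauss (lam k)"
    and dw: "\<And>k. k < d \<Longrightarrow> distr M borel (w k) = gauss 1"
begin

definition "I = (({..<n} \<times> {..<d}) <+> {..<d})"
definition "V = case_sum (\<lambda>(i, k). x i k) w"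
definition "vr = case_sum (\<lambda>(i, k). lam k) (\<lambda>_. 1::real)"
definition "gm v k = integral\<^sup>L (gauss (vr v)) (\<lambda>t. t ^ k)"
definition "mon e \<omega> = (\<Prod>v\<in>I. V v \<omega> ^ e v)"

lemma finI: "finite I" unfolding I_def by auto

lemma indV: "indep_vars (\<lambda>_. borel) V I" using ind unfolding I_def V_def .

lemma measV: "v \<in> I \<Longrightarrow> V v \<in> borel_measurable M"
  using indV unfolding indep_vars_def by auto

lemma distV: "v \<in> I \<Longrightarrow> distr M borel (V v) = gauss (vr v)"
  by (auto simp: I_def V_def vr_def dx dw)

lemma vr0: "v \<in> I \<Longrightarrow> vr v \<ge> 0"
  by (auto simp: I_def vr_def lam0)

lemma intV: assumes "v \<in> I" shows "integrable M (\<lambda>\<omega>. V v \<omega> ^ k)"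
proof -
  have "integrable (distr M borel (V v)) (\<lambda>t. t ^ k)"
    using distV[OF assms] gauss_int[OF vr0[OF assms]] by simp
  then show ?thesis using measV[OF assms] by (subst (asm) integrable_distr_eq) auto
qed

lemma integV: assumes "v \<in> I" shows "integral\<^sup>L M (\<lambda>\<omega>. V v \<omega> ^ k) = gm v k"
proof -
  have "integral\<^sup>L (distr M borel (V v)) (\<lambda>t. t ^ k) = integral\<^sup>L M (\<lambda>\<omega>. V v \<omega> ^ k)"
    using measV[OF assms] by (intro integral_distr) auto
  then show ?thesis using distV[OF assms] by (simp add: gm_def)
qed

lemma mon_int: "integrable M (mon e)" and mon_integral: "integral\<^sup>L M (mon e) = (\<Prod>v\<in>I. gm v (e v))"
proof -
  have ind2: "indep_vars (\<lambda>_. borel) (\<lambda>v \<omega>. V v \<omega> ^ e v) I"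
    using indep_vars_compose2[OF indV, of "\<lambda>v t. t ^ e v" "\<lambda>_. borel"] by simp
  show "integrable M (mon e)" unfolding mon_def
    by (rule indep_vars_integrable[OF finI ind2 intV])
  show "integral\<^sup>L M (mon e) = (\<Prod>v\<in>I. gm v (e v))" unfolding mon_def
    by (subst indep_vars_lebesgue_integral[OF finI ind2 intV]) (auto simp: integV intro: prod.cong)
qed

lemma mon_add: "mon (\<lambda>v. e1 v + e2 v) \<omega> = mon e1 \<omega> * mon e2 \<omega>"
  by (simp add: mon_def power_add prod.distrib)

lemma sub_int: assumes "F \<subseteq> I" shows "integrable M (\<lambda>\<omega>. \<Prod>v\<in>F. V v \<omega> ^ k v)"
  and "integral\<^sup>L M (\<lambda>\<omega>. \<Prod>v\<in>F. V v \<omega> ^ k v) = (\<Prod>v\<in>F. gm v (k v))"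
proof -
  define e where "e v = (if v \<in> F then k v else 0)" for v
  have F: "finite F" using assms finite_subset finI by blast
  have eq: "(\<Prod>v\<in>F. V v \<omega> ^ k v) = mon e \<omega>" for \<omega>
    unfolding mon_def e_def using assms finI by (intro prod.mono_neutral_cong_left) auto
  have gm0: "v \<in> I \<Longrightarrow> gm v 0 = 1" for v using integV[of v 0] by (simp add: prob_space)
  show "integrable M (\<lambda>\<omega>. \<Prod>v\<in>F. V v \<omega> ^ k v)" unfolding eq by (rule mon_int)
  show "integral\<^sup>L M (\<lambda>\<omega>. \<Prod>v\<in>F. V v \<omega> ^ k v) = (\<Prod>v\<in>F. gm v (k v))"
    unfolding eq mon_integral e_def using assms finI
    by (intro sym[OF prod.mono_neutral_cong_left]) (auto simp: gm0)
qed

end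

context GaussSetup begin

definition P :: "((nat \<times> nat) + nat) set \<Rightarrow> bool \<Rightarrow> ('a \<Rightarrow> real) \<Rightarrow> bool" where
  "P S p f \<longleftrightarrow> (\<exists>L. (\<forall>\<omega>. f \<omega> = (\<Sum>(c,e)\<leftarrow>L. c * mon e \<omega>)) \<and> (\<forall>(c,e)\<in>set L. odd (\<Sum>v\<in>S. e v) = p))"

lemma P_zero: "P S p (\<lambda>_. 0)"
  unfolding P_def by (rule exI[of _ "[]"]) simp

lemma P_const: "P S False (\<lambda>_. c)"
  unfolding P_def by (rule exI[of _ "[(c, \<lambda>_. 0)]"]) (simp add: mon_def)

lemma P_var: assumes "finite S" "v \<in> I" shows "P S (v \<in> S) (V v)"
proof -
  have "mon (\<lambda>u. if u = v then 1 else 0) \<omega> = V v \<omega>" for \<omega>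
    unfolding mon_def using assms finI
    by (simp add: if_distrib[of "\<lambda>k. V _ \<omega> ^ k"] prod.delta cong: if_cong)
  moreover have "odd (\<Sum>u\<in>S. if u = v then 1 else 0 :: nat) = (v \<in> S)"
    using assms by (simp add: sum.delta)
  ultimately show ?thesis
    unfolding P_def by (intro exI[of _ "[(1, \<lambda>u. if u = v then 1 else 0)]"]) simp
qed

lemma P_add: assumes "P S p f" "P S p g" shows "P S p (\<lambda>\<omega>. f \<omega> + g \<omega>)"
proof -
  obtain L1 where 1: "\<forall>\<omega>. f \<omega> = (\<Sum>(c,e)\<leftarrow>L1. c * mon e \<omega>)" "\<forall>(c,e)\<in>set L1. odd (\<Sum>v\<in>S. e v) = p"
    using assms(1) unfolding P_def by blast
  obtain L2 where 2: "\<forall>\<omega>. g \<omega> = (\<Sum>(c,e)\<leftarrow>L2. c * mon e \<omega>)" "\<forall>(c,e)\<in>set L2. odd (\<Sum>v\<in>S. e v) = p"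
    using assms(2) unfolding P_def by blast
  show ?thesis unfolding P_def
    by (rule exI[of _ "L1 @ L2"]) (use 1 2 in auto)
qed

lemma P_mult: assumes "P S p f" "P S q g" "finite S" shows "P S (p \<noteq> q) (\<lambda>\<omega>. f \<omega> * g \<omega>)"
proof -
  obtain L1 where 1: "\<forall>\<omega>. f \<omega> = (\<Sum>(c,e)\<leftarrow>L1. c * mon e \<omega>)" "\<forall>(c,e)\<in>set L1. odd (\<Sum>v\<in>S. e v) = p"
    using assms(1) unfolding P_def by blast
  obtain L2 where 2: "\<forall>\<omega>. g \<omega> = (\<Sum>(c,e)\<leftarrow>L2. c * mon e \<omega>)" "\<forall>(c,e)\<in>set L2. odd (\<Sum>v\<in>S. e v) = q"
    using assms(2) unfolding P_def by blast
  let ?L = "concat (map (\<lambda>(c1,e1). map (\<lambda>(c2,e2). (c1*c2, \<lambda>v. e1 v + e2 v)) L2) L1)"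
  have "f \<omega> * g \<omega> = (\<Sum>(c,e)\<leftarrow>?L. c * mon e \<omega>)" for \<omega>
  proof -
    have "f \<omega> * g \<omega> = (\<Sum>(c,e)\<leftarrow>L1. c * mon e \<omega>) * (\<Sum>(c,e)\<leftarrow>L2. c * mon e \<omega>)"
      using 1(1) 2(1) by simp
    also have "\<dots> = (\<Sum>(c,e)\<leftarrow>?L. c * mon e \<omega>)"
      by (rule sum_list_mult_concat) (rule mon_add)
    finally show ?thesis .
  qed
  moreover have "\<forall>(c,e)\<in>set ?L. odd (\<Sum>v\<in>S. e v) = (p \<noteq> q)"
  proof (intro ballI, clarify)
    fix c e assume "(c, e) \<in> set ?L"
    then obtain c1 e1 c2 e2 where m: "(c1,e1)\<in>set L1" "(c2,e2)\<in>set L2" "e = (\<lambda>v. e1 v + e2 v)"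
      by auto
    have "odd (\<Sum>v\<in>S. e1 v) = p" "odd (\<Sum>v\<in>S. e2 v) = q" using m 1(2) 2(2) by auto
    then show "odd (\<Sum>v\<in>S. e v) = (p \<noteq> q)" unfolding m(3) sum.distrib by auto
  qed
  ultimately show ?thesis unfolding P_def by blast
qed

lemma P_sum: assumes "finite A" "\<And>i. i \<in> A \<Longrightarrow> P S p (f i)" shows "P S p (\<lambda>\<omega>. \<Sum>i\<in>A. f i \<omega>)"
  using assms by (induction A rule: finite_induct) (auto intro: P_zero P_add)

lemma sl_int: "integrable M (\<lambda>\<omega>. \<Sum>(c,e)\<leftarrow>L. c * mon e \<omega>)"
  by (induction L) (auto intro!: mon_int)

lemma sl_integral: "integral\<^sup>L M (\<lambda>\<omega>. \<Sum>(c,e)\<leftarrow>L. c * mon e \<omega>) = (\<Sum>(c,e)\<leftarrow>L. c * integral\<^sup>L M (mon e))"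
proof (induction L)
  case Nil then show ?case by simp
next
  case (Cons a L)
  obtain c e where a: "a = (c, e)" by force
  have "integral\<^sup>L M (\<lambda>\<omega>. c * mon e \<omega> + (\<Sum>(c,e)\<leftarrow>L. c * mon e \<omega>)) =
    integral\<^sup>L M (\<lambda>\<omega>. c * mon e \<omega>) + integral\<^sup>L M (\<lambda>\<omega>. \<Sum>(c,e)\<leftarrow>L. c * mon e \<omega>)"
    by (rule Bochner_Integration.integral_add) (auto intro: sl_int mon_int)
  then show ?case using Cons a by simp
qed

lemma P_int: assumes "P S p f" shows "integrable M f"
proof -
  obtain L where 1: "\<forall>\<omega>. f \<omega> = (\<Sum>(c,e)\<leftarrow>L. c * mon e \<omega>)"
    using assms unfolding P_def by blast
  then have "f = (\<lambda>\<omega>. \<Sum>(c,e)\<leftarrow>L. c * mon e \<omega>)" by auto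
  then show ?thesis using sl_int by simp
qed

lemma P_zero_int: assumes "P S True f" "S \<subseteq> I" shows "integral\<^sup>L M f = 0"
proof -
  obtain L where 1: "\<forall>\<omega>. f \<omega> = (\<Sum>(c,e)\<leftarrow>L. c * mon e \<omega>)" "\<forall>(c,e)\<in>set L. odd (\<Sum>v\<in>S. e v)"
    using assms unfolding P_def by blast
  then have f: "f = (\<lambda>\<omega>. \<Sum>(c,e)\<leftarrow>L. c * mon e \<omega>)" by auto
  have z: "integral\<^sup>L M (mon e) = 0" if od: "odd (\<Sum>v\<in>S. e v)" for e
  proof -
    have "\<exists>v\<in>S. odd (e v)"
    proof (rule ccontr)
      assume "\<not> (\<exists>v\<in>S. odd (e v))"
      then have "even (\<Sum>v\<in>S. e v)" by (intro dvd_sum) blast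
      then show False using od by simp
    qed
    then obtain v where v: "v \<in> S" "odd (e v)" by blast
    then have "gm v (e v) = 0" using assms(2) gauss_odd[OF vr0] by (auto simp: gm_def)
    then show ?thesis unfolding mon_integral using v assms(2) finI
      by (intro prod_zero) auto
  qed
  have "(\<Sum>(c,e)\<leftarrow>L. c * integral\<^sup>L M (mon e)) = 0"
    using 1(2)
  proof (induction L)
    case (Cons a L)
    obtain c e where a: "a = (c, e)" by force
    show ?case using Cons z[of e] a by simp
  qed simp
  then show ?thesis unfolding f sl_integral .
qed

end

context GaussSetup begin

lemma xV: "x i k = V (Inl (i,k))" and wV: "w k = V (Inr k)" by (simp_all add: V_def)

lemma P_x: "finite S \<Longrightarrow> i < n \<Longrightarrow> k < d \<Longrightarrow> P S (Inl (i,k) \<in> S) (x i k)"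
  using P_var[of S "Inl (i,k)"] by (auto simp: I_def V_def)

lemma P_w: "finite S \<Longrightarrow> k < d \<Longrightarrow> P S (Inr k \<in> S) (w k)"
  using P_var[of S "Inr k"] by (auto simp: I_def V_def)

lemma P_label: assumes "finite S" "i < n" "\<And>k. k < d \<Longrightarrow> ((Inr k \<in> S) \<noteq> (Inl (i,k) \<in> S)) = p"
  shows "P S p (label d x w i)"
proof -
  have "P S p (\<lambda>\<omega>. \<Sum>k<d. w k \<omega> * x i k \<omega>)"
  proof (rule P_sum)
    fix k assume k: "k \<in> {..<d}"
    have "P S ((Inr k \<in> S) \<noteq> (Inl (i,k) \<in> S)) (\<lambda>\<omega>. w k \<omega> * x i k \<omega>)"
      by (rule P_mult[OF P_w P_x]) (use assms k in auto)
    then show "P S p (\<lambda>\<omega>. w k \<omega> * x i k \<omega>)" using assms(3)[of k] k by simp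
  qed simp
  then show ?thesis unfolding label_def[abs_def] by simp
qed

lemma P_z: assumes "finite S" "i < n" "a \<le> d" "a < d \<Longrightarrow> q = (Inl (i,a) \<in> S)"
  "a = d \<Longrightarrow> \<forall>k<d. ((Inr k \<in> S) \<noteq> (Inl (i,k) \<in> S)) = q"
  shows "P S q (\<lambda>\<omega>. zvec d x w i \<omega> a)"
proof (cases "a < d")
  case True
  then show ?thesis using assms P_x[of S i a] by (simp add: zvec_def)
next
  case False
  then have "a = d" using assms by simp
  then show ?thesis using assms P_label[of S i q] by (simp add: zvec_def)
qed

lemma P_C: assumes "finite S" "a \<le> d" "b \<le> d" "\<And>i c. i < n \<Longrightarrow> c \<le> d \<Longrightarrow> P S (zp c) (\<lambda>\<omega>. zvec d x w i \<omega> c)"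
  shows "P S (zp a \<noteq> zp b) (\<lambda>\<omega>. Cmat d n x w \<omega> a b)"
proof -
  have "P S (zp a \<noteq> zp b) (\<lambda>\<omega>. \<Sum>i<n. zvec d x w i \<omega> a * zvec d x w i \<omega> b)"
    by (rule P_sum) (use assms P_mult in auto)
  from P_mult[OF P_const[of S "1 / real n"] this assms(1)] show ?thesis unfolding Cmat_def by simp
qed

definition "W = Inr ` {..<d}"
definition "Sa c = insert (Inr c) ((\<lambda>i. Inl (i,c)) ` {..<n})"

lemma W: "finite W" "W \<subseteq> I" by (auto simp: W_def I_def)
lemma Sa: "finite (Sa c)" "c < d \<Longrightarrow> Sa c \<subseteq> I" by (auto simp: Sa_def I_def)

lemma zW: "i < n \<Longrightarrow> c \<le> d \<Longrightarrow> P W (c = d) (\<lambda>\<omega>. zvec d x w i \<omega> c)"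
  by (rule P_z) (auto simp: W_def)

lemma zSa: "b < d \<Longrightarrow> i < n \<Longrightarrow> c \<le> d \<Longrightarrow> P (Sa b) (c = b) (\<lambda>\<omega>. zvec d x w i \<omega> c)"
  by (rule P_z) (auto simp: Sa_def)

lemma z0: "i < n \<Longrightarrow> c \<le> d \<Longrightarrow> P {} False (\<lambda>\<omega>. zvec d x w i \<omega> c)"
  by (rule P_z) auto

lemma CW: "a \<le> d \<Longrightarrow> b \<le> d \<Longrightarrow> P W ((a = d) \<noteq> (b = d)) (\<lambda>\<omega>. Cmat d n x w \<omega> a b)"
  by (rule P_C[where zp="\<lambda>c. c = d"]) (auto intro: zW W)

lemma CSa: "c < d \<Longrightarrow> a \<le> d \<Longrightarrow> b \<le> d \<Longrightarrow> P (Sa c) ((a = c) \<noteq> (b = c)) (\<lambda>\<omega>. Cmat d n x w \<omega> a b)"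
  by (rule P_C[where zp="\<lambda>a. a = c"]) (auto intro: zSa Sa)

lemma C0: "a \<le> d \<Longrightarrow> b \<le> d \<Longrightarrow> P {} False (\<lambda>\<omega>. Cmat d n x w \<omega> a b)"
  using P_C[where zp="\<lambda>a. False" and S="{}"] z0 by auto

lemma orth_zero:
  assumes "a \<le> d" "b \<le> d" "j < d" "\<not> ((a = j \<and> b = d) \<or> (a = d \<and> b = j))"
  shows "integral\<^sup>L M (\<lambda>\<omega>. w j \<omega> * Cmat d n x w \<omega> a b) = 0"
    and "integral\<^sup>L M (\<lambda>\<omega>. Cmat d n x w \<omega> d j * Cmat d n x w \<omega> a b) = 0"
proof -
  have "\<exists>S. P S True (\<lambda>\<omega>. w j \<omega> * Cmat d n x w \<omega> a b) \<and> P S True (\<lambda>\<omega>. Cmat d n x w \<omega> d j * Cmat d n x w \<omega> a b) \<and> S \<subseteq> I"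
  proof (cases "(a = d) = (b = d)")
    case True
    have 1: "P W True (w j)" using P_w[OF W(1) assms(3)] by (simp add: W_def assms(3))
    have 2: "P W False (\<lambda>\<omega>. Cmat d n x w \<omega> a b)" using CW[OF assms(1,2)] True by simp
    have 3: "P W True (\<lambda>\<omega>. Cmat d n x w \<omega> d j)" using CW[of d j] assms by simp
    show ?thesis using P_mult[OF 1 2 W(1)] P_mult[OF 3 2 W(1)] W(2) by auto
  next
    case False
    define c where "c = (if a = d then b else a)"
    have c: "c < d" "c \<noteq> j" using False assms unfolding c_def by auto
    have 1: "P (Sa c) False (w j)" using P_w[OF Sa(1) assms(3), of c] c by (simp add: Sa_def image_iff)
    have 2: "P (Sa c) True (\<lambda>\<omega>. Cmat d n x w \<omega> a b)" using CSa[OF c(1) assms(1,2)] False c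
      unfolding c_def by (auto split: if_splits)
    have 3: "P (Sa c) False (\<lambda>\<omega>. Cmat d n x w \<omega> d j)" using CSa[OF c(1), of d j] assms c by simp
    show ?thesis using P_mult[OF 1 2 Sa(1)] P_mult[OF 3 2 Sa(1)] Sa(2)[OF c(1)] by auto
  qed
  then obtain S where S: "P S True (\<lambda>\<omega>. w j \<omega> * Cmat d n x w \<omega> a b)"
    "P S True (\<lambda>\<omega>. Cmat d n x w \<omega> d j * Cmat d n x w \<omega> a b)" "S \<subseteq> I" by blast
  show "integral\<^sup>L M (\<lambda>\<omega>. w j \<omega> * Cmat d n x w \<omega> a b) = 0" by (rule P_zero_int[OF S(1,3)])
  show "integral\<^sup>L M (\<lambda>\<omega>. Cmat d n x w \<omega> d j * Cmat d n x w \<omega> a b) = 0" by (rule P_zero_int[OF S(2,3)])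
qed

end

context GaussSetup begin

lemma P0x: "i < n \<Longrightarrow> k < d \<Longrightarrow> P {} False (x i k)" using P_x[of "{}"] by simp
lemma P0w: "k < d \<Longrightarrow> P {} False (w k)" using P_w[of "{}"] by simp
lemma P0_mult: "P {} False f \<Longrightarrow> P {} False g \<Longrightarrow> P {} False (\<lambda>\<omega>. f \<omega> * g \<omega>)"
  using P_mult[of "{}" False f False g] by simp
lemma P0_sum: "(\<And>i. i \<in> A \<Longrightarrow> P {} False (f i)) \<Longrightarrow> finite A \<Longrightarrow> P {} False (\<lambda>\<omega>. \<Sum>i\<in>A. f i \<omega>)"
  using P_sum[of A "{}" False f] by simp

lemma P_x': "finite S \<Longrightarrow> i < n \<Longrightarrow> k < d \<Longrightarrow> q = (Inl (i,k) \<in> S) \<Longrightarrow> P S q (x i k)"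
  using P_x by simp
lemma P_w': "finite S \<Longrightarrow> k < d \<Longrightarrow> q = (Inr k \<in> S) \<Longrightarrow> P S q (w k)"
  using P_w by simp

lemma gm2: "v \<in> I \<Longrightarrow> gm v 2 = vr v" by (simp add: gm_def gauss_2 vr0)
lemma gm4: "v \<in> I \<Longrightarrow> gm v 4 = 3 * (vr v)^2" by (simp add: gm_def gauss_4 vr0)

lemma comp1: assumes j: "j < d"
  shows "integral\<^sup>L M (\<lambda>\<omega>. w j \<omega> * Cmat d n x w \<omega> j d) = lam j"
proof -
  let ?T = "\<lambda>i l \<omega>. w j \<omega> * x i j \<omega> * (w l \<omega> * x i l \<omega>)"
  have eq: "(\<lambda>\<omega>. w j \<omega> * Cmat d n x w \<omega> j d) = (\<lambda>\<omega>. 1 / real n * (\<Sum>i<n. \<Sum>l<d. ?T i l \<omega>))"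
    using j by (auto simp: Cmat_def zvec_def label_def sum_distrib_left ac_simps)
  have intT: "integrable M (?T i l)" if "i < n" "l < d" for i l
    using that j by (intro P_int[of "{}" False] P0_mult P0x P0w)
  have intS: "integrable M (\<lambda>\<omega>. \<Sum>l<d. ?T i l \<omega>)" if "i < n" for i
    using that j by (intro P_int[of "{}" False] P0_sum P0_mult P0x P0w) auto
  have t: "integral\<^sup>L M (?T i l) = (if l = j then lam j else 0)" if "i < n" "l < d" for i l
  proof (cases "l = j")
    case True
    have F: "{Inr j, Inl (i, j)} \<subseteq> I" using that j by (auto simp: I_def)
    have "?T i l = (\<lambda>\<omega>. \<Prod>v\<in>{Inr j, Inl (i, j)}. V v \<omega> ^ 2)"
      using True by (auto simp: V_def power2_eq_square ac_simps)
    then show ?thesis using sub_int(2)[OF F, of "\<lambda>_. 2"] True gm2 F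
      by (simp add: vr_def)
  next
    case False
    have "P {Inr l} ((False \<noteq> False) \<noteq> (True \<noteq> False)) (?T i l)"
      using that j False by (intro P_mult P_x' P_w') auto
    then have "P {Inr l} True (?T i l)" by simp
    then show ?thesis using P_zero_int[of "{Inr l}"] False that by (auto simp: I_def)
  qed
  have "integral\<^sup>L M (\<lambda>\<omega>. w j \<omega> * Cmat d n x w \<omega> j d) = 1 / real n * (\<Sum>i<n. \<Sum>l<d. integral\<^sup>L M (?T i l))"
  proof -
    have a: "integral\<^sup>L M (\<lambda>\<omega>. \<Sum>i<n. \<Sum>l<d. ?T i l \<omega>) = (\<Sum>i<n. integral\<^sup>L M (\<lambda>\<omega>. \<Sum>l<d. ?T i l \<omega>))"
      by (rule Bochner_Integration.integral_sum) (use intS in auto)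
    have b: "integral\<^sup>L M (\<lambda>\<omega>. \<Sum>l<d. ?T i l \<omega>) = (\<Sum>l<d. integral\<^sup>L M (?T i l))" if "i < n" for i
      by (rule Bochner_Integration.integral_sum) (use intT that in auto)
    show ?thesis unfolding eq integral_mult_right_zero a using b by simp
  qed
  also have "\<dots> = 1 / real n * (\<Sum>i<n. lam j)"
    using j by (simp add: t)
  also have "\<dots> = lam j" using n1 by simp
  finally show ?thesis .
qed


lemma comp2: assumes j: "j < d"
  shows "integral\<^sup>L M (\<lambda>\<omega>. Cmat d n x w \<omega> d j * Cmat d n x w \<omega> j d) =
    lam j * ((real n + 1) * lam j + (\<Sum>k<d. lam k)) / real n"
proof -
  let ?T = "\<lambda>i i' l m \<omega>. (w l \<omega> * x i l \<omega> * x i j \<omega>) * (x i' j \<omega> * (w m \<omega> * x i' m \<omega>))"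
  have eq: "(\<lambda>\<omega>. Cmat d n x w \<omega> d j * Cmat d n x w \<omega> j d) =
    (\<lambda>\<omega>. 1 / real n * (1 / real n) * (\<Sum>i<n. \<Sum>i'<n. \<Sum>l<d. \<Sum>m<d. ?T i i' l m \<omega>))"
  proof
    fix \<omega>
    have A: "(\<Sum>i<n. label d x w i \<omega> * x i j \<omega>) = (\<Sum>i<n. \<Sum>l<d. w l \<omega> * x i l \<omega> * x i j \<omega>)"
      by (simp add: label_def sum_distrib_right)
    have B: "(\<Sum>i<n. x i j \<omega> * label d x w i \<omega>) = (\<Sum>i<n. \<Sum>m<d. x i j \<omega> * (w m \<omega> * x i m \<omega>))"
      by (simp add: label_def sum_distrib_left)
    show "Cmat d n x w \<omega> d j * Cmat d n x w \<omega> j d =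
      1 / real n * (1 / real n) * (\<Sum>i<n. \<Sum>i'<n. \<Sum>l<d. \<Sum>m<d. ?T i i' l m \<omega>)"
      using j by (simp add: Cmat_def zvec_def A B sum_product)
  qed
  have PT: "P {} False (?T i i' l m)" if "i < n" "i' < n" "l < d" "m < d" for i i' l m
    using that j by (intro P0_mult P0x P0w)
  have int1: "integrable M (\<lambda>\<omega>. \<Sum>m<d. ?T i i' l m \<omega>)" if "i < n" "i' < n" "l < d" for i i' l
    using that by (intro P_int[of "{}" False] P0_sum PT) auto
  have int2: "integrable M (\<lambda>\<omega>. \<Sum>l<d. \<Sum>m<d. ?T i i' l m \<omega>)" if "i < n" "i' < n" for i i'
    using that by (intro P_int[of "{}" False] P0_sum PT) auto
  have int3: "integrable M (\<lambda>\<omega>. \<Sum>i'<n. \<Sum>l<d. \<Sum>m<d. ?T i i' l m \<omega>)" if "i < n" for i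
    using that by (intro P_int[of "{}" False] P0_sum PT) auto
  define Tv where "Tv (i::nat) (i'::nat) (l::nat) (m::nat) = (if l = m then (if i = i' then (if l = j then 3 * (lam j)^2 else lam l * lam j)
      else (if l = j then (lam j)^2 else 0)) else 0)" for i i' l m
  have t: "integral\<^sup>L M (?T i i' l m) = Tv i i' l m" if th: "i < n" "i' < n" "l < d" "m < d" for i i' l m
  proof -
    have inI: "Inr k \<in> I" "Inl (i, k) \<in> I" "Inl (i', k) \<in> I" if "k < d" for k
      using that th by (auto simp: I_def)
    show ?thesis
    proof (cases "l = m")
      case False
      have "P {Inr l} (((True \<noteq> False) \<noteq> False) \<noteq> (False \<noteq> (False \<noteq> False))) (?T i i' l m)"
        using th j False by (intro P_mult P_x' P_w') auto
      then have "P {Inr l} True (?T i i' l m)" by simp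
      then show ?thesis using P_zero_int[of "{Inr l}"] False inI th by (auto simp: Tv_def)
    next
      case lm: True
      show ?thesis
      proof (cases "i = i'")
        case ii: True
        show ?thesis
        proof (cases "l = j")
          case True
          let ?F = "{Inr j, Inl (i, j)}"
          let ?k = "\<lambda>v. if v = Inr j then 2 else (4::nat)"
          have F: "?F \<subseteq> I" using inI j by auto
          have "?T i i' l m = (\<lambda>\<omega>. \<Prod>v\<in>?F. V v \<omega> ^ ?k v)"
            using True lm ii by (auto simp: V_def eval_nat_numeral ac_simps)
          then show ?thesis using sub_int(2)[OF F, of ?k] True lm ii gm2 gm4 F
            by (simp add: vr_def Tv_def)
        next
          case False
          let ?F = "{Inr l, Inl (i, l), Inl (i, j)}"
          have F: "?F \<subseteq> I" using inI j th by auto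
          have "?T i i' l m = (\<lambda>\<omega>. \<Prod>v\<in>?F. V v \<omega> ^ 2)"
            using False lm ii by (auto simp: V_def eval_nat_numeral ac_simps)
          then show ?thesis using sub_int(2)[OF F, of "\<lambda>_. 2"] False lm ii gm2 F
            by (simp add: vr_def Tv_def)
        qed
      next
        case ii: False
        show ?thesis
        proof (cases "l = j")
          case True
          let ?F = "{Inr j, Inl (i, j), Inl (i', j)}"
          have F: "?F \<subseteq> I" using inI j th by auto
          have "?T i i' l m = (\<lambda>\<omega>. \<Prod>v\<in>?F. V v \<omega> ^ 2)"
            using True lm ii by (auto simp: V_def eval_nat_numeral ac_simps)
          then show ?thesis using sub_int(2)[OF F, of "\<lambda>_. 2"] True lm ii gm2 F
            by (simp add: vr_def Tv_def power2_eq_square)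
        next
          case False
          have "P {Inl (i, l)} (((False \<noteq> True) \<noteq> False) \<noteq> (False \<noteq> (False \<noteq> False))) (?T i i' l m)"
            using th j False lm ii by (intro P_mult P_x' P_w') auto
          then have "P {Inl (i, l)} True (?T i i' l m)" by simp
          then show ?thesis using P_zero_int[of "{Inl (i, l)}"] False inI th lm ii by (auto simp: Tv_def)
        qed
      qed
    qed
  qed
  have "integral\<^sup>L M (\<lambda>\<omega>. Cmat d n x w \<omega> d j * Cmat d n x w \<omega> j d) =
    1 / real n * (1 / real n) * (\<Sum>i<n. \<Sum>i'<n. \<Sum>l<d. \<Sum>m<d. integral\<^sup>L M (?T i i' l m))"
  proof -
    have a: "integral\<^sup>L M (\<lambda>\<omega>. \<Sum>i<n. \<Sum>i'<n. \<Sum>l<d. \<Sum>m<d. ?T i i' l m \<omega>) =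
        (\<Sum>i<n. integral\<^sup>L M (\<lambda>\<omega>. \<Sum>i'<n. \<Sum>l<d. \<Sum>m<d. ?T i i' l m \<omega>))"
      by (rule Bochner_Integration.integral_sum) (use int3 in auto)
    have b: "integral\<^sup>L M (\<lambda>\<omega>. \<Sum>i'<n. \<Sum>l<d. \<Sum>m<d. ?T i i' l m \<omega>) =
        (\<Sum>i'<n. integral\<^sup>L M (\<lambda>\<omega>. \<Sum>l<d. \<Sum>m<d. ?T i i' l m \<omega>))" if "i < n" for i
      by (rule Bochner_Integration.integral_sum) (use int2 that in auto)
    have c: "integral\<^sup>L M (\<lambda>\<omega>. \<Sum>l<d. \<Sum>m<d. ?T i i' l m \<omega>) =
        (\<Sum>l<d. integral\<^sup>L M (\<lambda>\<omega>. \<Sum>m<d. ?T i i' l m \<omega>))" if "i < n" "i' < n" for i i'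
      by (rule Bochner_Integration.integral_sum) (use int1 that in auto)
    have e: "integral\<^sup>L M (\<lambda>\<omega>. \<Sum>m<d. ?T i i' l m \<omega>) =
        (\<Sum>m<d. integral\<^sup>L M (?T i i' l m))" if "i < n" "i' < n" "l < d" for i i' l
      by (rule Bochner_Integration.integral_sum, rule P_int[OF PT]) (use that in auto)
    show ?thesis unfolding eq integral_mult_right_zero a using b c e by simp
  qed
  also have "\<dots> = 1 / real n * (1 / real n) * (\<Sum>i<n. \<Sum>i'<n. \<Sum>l<d. \<Sum>m<d. Tv i i' l m)"
    using t by simp
  also have "\<dots> = lam j * ((real n + 1) * lam j + (\<Sum>k<d. lam k)) / real n"
  proof -
    let ?S = "\<Sum>k<d. lam k"
    have s1: "(\<Sum>m<d. Tv i i' l m) = (if i = i' then (if l = j then 3 * (lam j)^2 else lam l * lam j)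
      else (if l = j then (lam j)^2 else 0))" if "l < d" for i i' l
      using that by (simp add: Tv_def)
    have s2: "(\<Sum>l<d. (if i = i' then (if l = j then 3 * (lam j)^2 else lam l * lam j)
      else (if l = j then (lam j)^2 else 0))) = (if i = i' then ?S * lam j + 2 * (lam j)^2 else (lam j)^2)" for i i' :: nat
    proof (cases "i = i'")
      case True
      have "(\<Sum>l<d. (if l = j then 3 * (lam j)^2 else lam l * lam j)) =
        (\<Sum>l<d. lam l * lam j + (if l = j then 2 * (lam j)^2 else 0))"
        by (rule sum.cong) (auto simp: power2_eq_square)
      also have "\<dots> = ?S * lam j + 2 * (lam j)^2"
        using j by (simp add: sum.distrib sum_distrib_right)
      finally show ?thesis using True by simp
    next
      case False
      then show ?thesis using j by simp
    qed
    have s3: "(\<Sum>i'<n. (if i = i' then A else B)) = A + (real n - 1) * B" if "i < n" for i and A B :: real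
    proof -
      have "(\<Sum>i'<n. (if i = i' then A else B)) = (\<Sum>i'<n. B + (if i = i' then A - B else 0))"
        by (rule sum.cong) auto
      also have "\<dots> = real n * B + (A - B)" using that by (simp add: sum.distrib)
      finally show ?thesis by (simp add: algebra_simps)
    qed
    have "(\<Sum>i<n. \<Sum>i'<n. \<Sum>l<d. \<Sum>m<d. Tv i i' l m) =
      (\<Sum>i<n. \<Sum>i'<n. (if i = i' then ?S * lam j + 2 * (lam j)^2 else (lam j)^2))"
      by (simp add: s1 s2)
    also have "\<dots> = (\<Sum>i<n. ?S * lam j + 2 * (lam j)^2 + (real n - 1) * (lam j)^2)"
      by (rule sum.cong) (auto simp: s3)
    also have "\<dots> = real n * (?S * lam j + 2 * (lam j)^2 + (real n - 1) * (lam j)^2)" by simp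
    finally have "(\<Sum>i<n. \<Sum>i'<n. \<Sum>l<d. \<Sum>m<d. Tv i i' l m) =
       real n * (?S * lam j + 2 * (lam j)^2 + (real n - 1) * (lam j)^2)" .
    then show ?thesis using n1 by (simp add: field_simps power2_eq_square)
  qed
  finally show ?thesis .
qed

end

context GaussSetup begin

lemma P0C: "a \<le> d \<Longrightarrow> b \<le> d \<Longrightarrow> P {} False (\<lambda>\<omega>. Cmat d n x w \<omega> a b)" by (rule C0)

lemma main:
  fixes X :: "nat \<Rightarrow> nat \<Rightarrow> real"
  assumes j: "j < d"
  defines "\<kappa> \<equiv> 1 / ((real n + 1) / real n * lam j + (1 / real n) * (\<Sum>k<d. lam k))"
  shows "fj M d n x w j (\<lambda>r c. - \<kappa> * Emat d j r c) \<le> fj M d n x w j X"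
proof -
  define Xj where "Xj = (\<lambda>r c. - \<kappa> * Emat d j r c)"
  let ?C = "\<lambda>a b \<omega>. Cmat d n x w \<omega> a b"
  let ?S = "\<Sum>k<d. lam k"
  have Csym: "?C d j = ?C j d" by (auto simp: Cmat_def mult.commute)
  have key: "lam j = \<kappa> * (lam j * ((real n + 1) * lam j + ?S) / real n)"
  proof (cases "lam j = 0")
    case False
    then have "lam j > 0" using lam0[OF j] by simp
    moreover have "?S \<ge> 0" using lam0 by (intro sum_nonneg) auto
    ultimately have Dp: "(real n + 1) * lam j + ?S > 0"
      by (simp add: add_pos_nonneg)
    have k: "\<kappa> = real n / ((real n + 1) * lam j + ?S)" unfolding \<kappa>_def using n1
      by (simp add: field_simps)
    have "\<kappa> * (lam j * ((real n + 1) * lam j + ?S) / real n) = lam j * (((real n + 1) * lam j + ?S) / ((real n + 1) * lam j + ?S))"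
      unfolding k using n1 by simp
    then show ?thesis using Dp by simp
  qed simp
  have orth: "integral\<^sup>L M (\<lambda>\<omega>. w j \<omega> * ?C a b \<omega>) = \<kappa> * integral\<^sup>L M (\<lambda>\<omega>. ?C d j \<omega> * ?C a b \<omega>)"
    if "a \<le> d" "b \<le> d" for a b
  proof (cases "(a = j \<and> b = d) \<or> (a = d \<and> b = j)")
    case True
    have Cs: "Cmat d n x w \<omega> d j = Cmat d n x w \<omega> j d" for \<omega> by (simp add: Cmat_def mult.commute)
    then have ab: "Cmat d n x w \<omega> a b = Cmat d n x w \<omega> j d" for \<omega> using True by auto
    have "integral\<^sup>L M (\<lambda>\<omega>. w j \<omega> * ?C a b \<omega>) = lam j" using comp1[OF j] by (simp add: ab)
    moreover have "integral\<^sup>L M (\<lambda>\<omega>. ?C d j \<omega> * ?C a b \<omega>) = lam j * ((real n + 1) * lam j + ?S) / real n"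
      using comp2[OF j] by (simp add: ab)
    ultimately show ?thesis using key by simp
  next
    case False
    then show ?thesis using orth_zero[OF that j False] by simp
  qed
  define r where "r \<omega> = w j \<omega> - \<kappa> * ?C d j \<omega>" for \<omega>
  have Pr: "P {} False r"
  proof -
    have "P {} False (\<lambda>\<omega>. w j \<omega> + (- \<kappa>) * ?C d j \<omega>)"
      using j by (intro P_add P0w P0_mult P_const P0C) auto
    then show ?thesis unfolding r_def by simp
  qed
  define LX where "LX Y \<omega> = (\<Sum>a\<le>d. \<Sum>b\<le>d. ?C a b \<omega> * Y a b)" for Y :: "nat \<Rightarrow> nat \<Rightarrow> real" and \<omega>
  have PL: "P {} False (LX Y)" for Y
  proof -
    have "P {} False (\<lambda>\<omega>. \<Sum>a\<le>d. \<Sum>b\<le>d. ?C a b \<omega> * Y a b)"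
      by (intro P0_sum P0_mult P_const P0C) auto
    then show ?thesis unfolding LX_def[abs_def] .
  qed
  have orthL: "integral\<^sup>L M (\<lambda>\<omega>. r \<omega> * LX Y \<omega>) = 0" for Y
  proof -
    have z: "integral\<^sup>L M (\<lambda>\<omega>. r \<omega> * ?C a b \<omega> * Y a b) = 0" if "a \<le> d" "b \<le> d" for a b
    proof -
      have "integral\<^sup>L M (\<lambda>\<omega>. r \<omega> * ?C a b \<omega>) =
          integral\<^sup>L M (\<lambda>\<omega>. w j \<omega> * ?C a b \<omega>) - integral\<^sup>L M (\<lambda>\<omega>. \<kappa> * (?C d j \<omega> * ?C a b \<omega>))"
        unfolding r_def left_diff_distrib mult.assoc
        by (rule Bochner_Integration.integral_diff)
          (use that j in \<open>auto intro!: P_int[of "{}" False] P0_mult P0w P0C P_const\<close>)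
      also have "\<dots> = 0" using orth[OF that] by simp
      finally show ?thesis by simp
    qed
    have i1: "integrable M (\<lambda>\<omega>. r \<omega> * ?C a b \<omega> * Y a b)" if "a \<le> d" "b \<le> d" for a b
      using that by (intro P_int[of "{}" False] P0_mult P0C Pr P_const)
    have i2: "integrable M (\<lambda>\<omega>. \<Sum>b\<le>d. r \<omega> * ?C a b \<omega> * Y a b)" if "a \<le> d" for a
      using that by (intro P_int[of "{}" False] P0_sum P0_mult P0C Pr P_const) auto
    have "(\<lambda>\<omega>. r \<omega> * LX Y \<omega>) = (\<lambda>\<omega>. \<Sum>a\<le>d. \<Sum>b\<le>d. r \<omega> * ?C a b \<omega> * Y a b)"
      by (auto simp: LX_def sum_distrib_left ac_simps)
    then have "integral\<^sup>L M (\<lambda>\<omega>. r \<omega> * LX Y \<omega>) = (\<Sum>a\<le>d. \<Sum>b\<le>d. integral\<^sup>L M (\<lambda>\<omega>. r \<omega> * ?C a b \<omega> * Y a b))"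
      using i1 i2 by (simp add: Bochner_Integration.integral_sum)
    also have "\<dots> = 0" by (intro sum.neutral ballI z) auto
    finally show ?thesis .
  qed
  have LXj: "LX Xj \<omega> = - \<kappa> * ?C d j \<omega>" for \<omega>
  proof -
    have e: "?C a b \<omega> * Xj a b = (if a = d then (if b = j then - \<kappa> * ?C d j \<omega> else 0) else 0)" for a b
      by (auto simp: Xj_def Emat_def)
    have "LX Xj \<omega> = (\<Sum>a\<le>d. if a = d then (\<Sum>b\<le>d. if b = j then - \<kappa> * ?C d j \<omega> else 0) else 0)"
      unfolding LX_def e by (intro sum.cong refl) (case_tac "xa = d", simp_all)
    also have "\<dots> = - \<kappa> * ?C d j \<omega>" using j by simp
    finally show ?thesis .
  qed
  define D where "D \<omega> = LX X \<omega> - LX Xj \<omega>" for \<omega>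
  have PD: "P {} False D"
    using P_add[OF PL[of X] P0_mult[OF P_const[of "{}" "-1"] PL[of Xj]]]
    unfolding D_def[abs_def] by simp
  have rD: "integral\<^sup>L M (\<lambda>\<omega>. r \<omega> * D \<omega>) = 0"
  proof -
    have "integral\<^sup>L M (\<lambda>\<omega>. r \<omega> * D \<omega>) = integral\<^sup>L M (\<lambda>\<omega>. r \<omega> * LX X \<omega>) -
        integral\<^sup>L M (\<lambda>\<omega>. r \<omega> * LX Xj \<omega>)"
      unfolding D_def right_diff_distrib
      by (rule Bochner_Integration.integral_diff) (auto intro!: P_int[of "{}" False] P0_mult Pr PL)
    then show ?thesis using orthL by simp
  qed
  have fX: "fj M d n x w j X = integral\<^sup>L M (\<lambda>\<omega>. (r \<omega>)^2 + 2 * (r \<omega> * D \<omega>) + (D \<omega>)^2)"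
    unfolding fj_def
  proof (rule Bochner_Integration.integral_cong)
    fix \<omega>
    have "frob d (Cmat d n x w \<omega>) X = LX X \<omega>" by (simp add: LX_def frob_def)
    moreover have "D \<omega> = LX X \<omega> + \<kappa> * ?C d j \<omega>" by (simp add: D_def LXj)
    ultimately show "(frob d (Cmat d n x w \<omega>) X + w j \<omega>)\<^sup>2 = (r \<omega>)^2 + 2 * (r \<omega> * D \<omega>) + (D \<omega>)^2"
      by (simp add: r_def power2_eq_square algebra_simps)
  qed simp
  have fXj: "fj M d n x w j Xj = integral\<^sup>L M (\<lambda>\<omega>. (r \<omega>)^2)"
    unfolding fj_def
  proof (rule Bochner_Integration.integral_cong)
    fix \<omega>
    have "frob d (Cmat d n x w \<omega>) Xj = LX Xj \<omega>" by (simp add: LX_def frob_def)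
    then show "(frob d (Cmat d n x w \<omega>) Xj + w j \<omega>)\<^sup>2 = (r \<omega>)^2"
      by (simp add: r_def LXj)
  qed simp
  have ir: "integrable M (\<lambda>\<omega>. (r \<omega>)^2)" unfolding power2_eq_square
    by (intro P_int[of "{}" False] P0_mult Pr)
  have irD: "integrable M (\<lambda>\<omega>. 2 * (r \<omega> * D \<omega>))"
    by (intro P_int[of "{}" False] P0_mult Pr PD P_const)
  have iD: "integrable M (\<lambda>\<omega>. (D \<omega>)^2)" unfolding power2_eq_square
    by (intro P_int[of "{}" False] P0_mult PD)
  have "fj M d n x w j X = integral\<^sup>L M (\<lambda>\<omega>. (r \<omega>)^2) + 2 * integral\<^sup>L M (\<lambda>\<omega>. r \<omega> * D \<omega>) + integral\<^sup>L M (\<lambda>\<omega>. (D \<omega>)^2)"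
    unfolding fX using ir irD iD by simp
  also have "\<dots> \<ge> integral\<^sup>L M (\<lambda>\<omega>. (r \<omega>)^2)" using rD by simp
  finally show ?thesis using fXj unfolding Xj_def by simp
qed

end

theorem lemma3:
  fixes M :: "'a measure" and d n j :: nat and lam :: "nat \<Rightarrow> real"
    and x :: "nat \<Rightarrow> nat \<Rightarrow> 'a \<Rightarrow> real" and w :: "nat \<Rightarrow> 'a \<Rightarrow> real"
  assumes "prob_space M"
    and "d \<ge> 1" and "n \<ge> 1"
    and "\<And>k. k < d \<Longrightarrow> lam k \<ge> 0"
    and "prob_space.indep_vars M (\<lambda>_. borel) (case_sum (\<lambda>(i, k). x i k) w)
           (({..<n} \<times> {..<d}) <+> {..<d})"
    and "\<And>i k. i < n \<Longrightarrow> k < d \<Longrightarrow> distr M borel (x i k) = gauss (lam k)"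
    and "\<And>k. k < d \<Longrightarrow> distr M borel (w k) = gauss 1"
    and "j < d"
  shows "\<forall>X. fj M d n x w j
           (\<lambda>r c. - (1 / ((real n + 1) / real n * lam j + (1 / real n) * (\<Sum>k<d. lam k)))
                   * Emat d j r c)
         \<le> fj M d n x w j X"
proof -
  interpret GS: GaussSetup M d n lam x w
    using assms by (intro GaussSetup.intro GaussSetup_axioms.intro) auto
  show ?thesis using GS.main[OF assms(8)] by blast
qed

end
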